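(* Consider the iterates of AS-ALM and fix $k\ge0$ with $\eta_k\in(0,1/\nu)$. Then for all $w=(x;\lambda)\in\Omega$, $$f(x)-f(x^{k+1})+(w-\tilde w^k)^\top\mathcal J(w)\ge\frac12\Big\{\|w-w^{k+1}\|_{\tilde Q_k}^2-\|w-w^k\|_{\tilde Q_k}^2+\|w^k-\tilde w^k\|_{\tilde G_k}^2\Big\}+\zeta^k(x),$$ where $\tilde Q_k=\begin{bmatrix}\mathcal D_k&0\\0&\frac1{s\beta}I\end{bmatrix}$ and $\tilde G_k=\begin{bmatrix}\mathcal D_k&0\\0&\frac{2-s}{\beta}I\end{bmatrix}$.
   Context: Setting. $\mathcal X\subset\mathbb R^{n_1}$ is a nonempty closed convex set; $A\in\mathbb R^{n\times n_1}$, $b\in\mathbb R^n$; $f=\frac1N\sum_{j=1}^Nf_j$, each $f_j$ real-valued, convex and continuously differentiable on an open set containing $\mathcal X$. The problem is $\min\{f(x):Ax=b,\ x\in\mathcal X\}$. A fixed symmetric positive definite $H$ and a constant $\nu>0$ satisfy $\|\nabla f_j(x_1)-\nabla f_j(x_2)\|_{H^{-1}}\le\nu\|x_1-x_2\|_H$ for all $x_1,x_2\in\mathcal X$ and all $j$. For symmetric $G$, $\|v\|_G^2:=v^\top Gv$; $G_1\succeq G_2$ means $G_1-G_2$ is positive semidefinite. Subroutine xsub. Inputs: $x^k\in\mathcal X$, $\breve x^k$, $h\in\mathbb R^{n_1}$, an integer $m_k\ge1$, $\eta_k>0$, a symmetric matrix $M_k$. Set $x_1=x^k$, $\breve x_1=\breve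 x^k$. For $t=1,\dots,m_k$: draw $\xi_t$ uniformly from $\{1,\dots,N\}$, independently of everything generated before; set $\beta_t=2/(t+1)$, $\gamma_t=2/(t\eta_k)$, $\hat x_t=\beta_t\breve x_t+(1-\beta_t)x_t$, $d_t=\nabla f_{\xi_t}(\hat x_t)+e_t$ where $e_t$ is a random vector whose conditional expectation given all previously generated random quantities and $\xi_t$ is $0$; $\breve x_{t+1}=\arg\min_{x\in\mathcal X}\{\langle d_t+h,x\rangle+\frac{\gamma_t}2\|x-\breve x_t\|_H^2+\frac12\|x-x^k\|_{M_k}^2\}$; $x_{t+1}=\beta_t\breve x_{t+1}+(1-\beta_t)x_t$. Output $x^{k+1}=x_{m_k+1}$, $\breve x^{k+1}=\breve x_{m_k+1}$. Put $\delta_t=\nabla f(\hat x_t)-d_t$ (inner quantities of outer iteration $k$), and for $x\in\mathcal X$ $$\zeta^k(x)=\frac{2}{m_k(m_k+1)}\Big[\frac1{\eta_k}\big(\|x-\breve x^{k+1}\|_H^2-\|x-\breve x^k\|_H^2\big)-\sum_{t=1}^{m_k}t\langle\delta_t,\breve x_t-x\rangle-\frac{\eta_k}{4(1-\eta_k\nu)}\sum_{t=1}^{m_k}t^2\|\delta_t\|_{H^{-1}}^2\Big].$$ Algorithm AS-ALM. Parameters: $\beta>0$, $s\in(0,2]$, the matrix $H$. Start: $(x^0,\lambda^0)\in\mathcal X\times\mathbb R^n$, $\breve x^0=x^0$. For $k=0,1,\dots$: choose an integer $m_k\ge1$, $\eta_k>0$ and a symmetric $M_k$ with $\mathcal D_k:=M_k-\beta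 A^\top A\succeq0$; set $h^k=-A^\top[\lambda^k-\beta(Ax^k-b)]$; compute $(x^{k+1},\breve x^{k+1})$ by xsub with inputs $x^k,\breve x^k,h^k,m_k,\eta_k,M_k$; $\lambda^{k+1}=\lambda^k-s\beta(Ax^{k+1}-b)$. Notation. $\Omega=\mathcal X\times\mathbb R^n$; $w=(x;\lambda)$; $\mathcal J(w)=(-A^\top\lambda;\,Ax-b)$; $w^k=(x^k;\lambda^k)$; $\tilde\lambda^k=\lambda^k-\beta(Ax^{k+1}-b)$; $\tilde w^k=(x^{k+1};\tilde\lambda^k)$. *)

theory Defs
  imports "HOL-Analysis.Analysis"
begin

definition qsq :: "real^'n^'n \<Rightarrow> real^'n \<Rightarrow> real" where
  "qsq G v = v \<bullet> (G *v v)"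

definition qnorm :: "real^'n^'n \<Rightarrow> real^'n \<Rightarrow> real" where
  "qnorm G v = sqrt (qsq G v)"

definition psd :: "real^'n^'n \<Rightarrow> bool" where
  "psd G \<longleftrightarrow> (\<forall>v. qsq G v \<ge> 0)"

definition sym_pd :: "real^'n^'n \<Rightarrow> bool" where
  "sym_pd G \<longleftrightarrow> transpose G = G \<and> (\<forall>v. v \<noteq> 0 \<longrightarrow> qsq G v > 0)"

definition betaI :: "nat \<Rightarrow> real" where
  "betaI t = 2 / (real t + 1)"

definition gammaI :: "real \<Rightarrow> nat \<Rightarrow> real" where
  "gammaI eta t = 2 / (real t * eta)"

end

theory Submission
  imports Defs
begin


definition bf :: "real^'n^'n \<Rightarrow> real^'n \<Rightarrow> real^'n \<Rightarrow> real" where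
  "bf G u v = u \<bullet> (G *v v)"

lemma bf_add_left[simp]: "bf G (u + w) v = bf G u v + bf G w v"
  by (simp add: bf_def inner_add_left)
lemma bf_add_right[simp]: "bf G u (v + w) = bf G u v + bf G u w"
  by (simp add: bf_def inner_add_right matrix_vector_right_distrib)
lemma bf_diff_left[simp]: "bf G (u - w) v = bf G u v - bf G w v"
  by (simp add: bf_def inner_diff_left)
lemma bf_diff_right[simp]: "bf G u (v - w) = bf G u v - bf G u w"
  by (simp add: bf_def inner_diff_right matrix_vector_mult_diff_distrib)
lemma bf_scale_left[simp]: "bf G (c *\<^sub>R u) v = c * bf G u v"
  by (simp add: bf_def)
lemma bf_scale_right[simp]: "bf G u (c *\<^sub>R v) = c * bf G u v"
  by (simp add: bf_def matrix_vector_mult_scaleR)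
lemma bf_minus_left[simp]: "bf G (- u) v = - bf G u v"
  by (simp add: bf_def)
lemma bf_minus_right[simp]: "bf G u (- v) = - bf G u v"
proof -
  have "- v = (-1) *\<^sub>R v" by simp
  then show ?thesis by (simp only: bf_scale_right)
qed
lemma bf_zero[simp]: "bf G 0 v = 0" "bf G u 0 = 0"
  by (simp_all add: bf_def)
lemma bf_sym: "transpose G = G \<Longrightarrow> bf G u v = bf G v u"
  unfolding bf_def by (metis dot_lmul_matrix inner_commute vector_transpose_matrix)
lemma qsq_bf: "qsq G v = bf G v v"
  by (simp add: qsq_def bf_def)
lemma bf_mdiff: "bf (G1 - G2) u v = bf G1 u v - bf G2 u v"
  by (simp add: bf_def matrix_vector_mult_diff_rdistrib inner_diff_right)
lemma bf_mscale: "bf (c *\<^sub>R G) u v = c * bf G u v"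
  by (simp add: bf_def scaleR_matrix_vector_assoc[symmetric])
lemma bf_AtA: "bf (transpose A ** A) u v = (A *v u) \<bullet> (A *v v)"
  unfolding bf_def by (metis matrix_vector_mul_assoc transpose_matrix_vector dot_lmul_matrix inner_commute)

lemma psd_of_sym_pd: "sym_pd H \<Longrightarrow> qsq H v \<ge> 0"
  unfolding sym_pd_def by (cases "v = 0") (auto simp: qsq_def intro: less_imp_le)

lemma sym_pd_inv:
  fixes H :: "real^'n^'n"
  assumes "sym_pd H" shows "H ** matrix_inv H = mat 1"
proof -
  have "\<forall>x. H *v x = 0 \<longrightarrow> x = 0"
  proof (intro allI impI)
    fix x assume "H *v x = 0"
    then have "qsq H x = 0" by (simp add: qsq_def)
    then show "x = 0" using assms unfolding sym_pd_def by force
  qed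
  then obtain B where "B ** H = mat 1" using matrix_left_invertible_ker by blast
  then have "invertible H" using invertible_left_inverse by blast
  then have "\<exists>A'. H ** A' = mat 1 \<and> A' ** H = mat 1" by (simp add: invertible_def)
  then have "H ** matrix_inv H = mat 1 \<and> matrix_inv H ** H = mat 1"
    unfolding matrix_inv_def by (rule someI_ex)
  then show ?thesis by blast
qed

lemma young:
  fixes H Hi :: "real^'n^'n"
  assumes H: "sym_pd H" and Hi: "H ** Hi = mat 1" and c: "c > 0"
  shows "a \<bullet> b \<le> c/2 * qsq Hi a + 1/(2*c) * qsq H b"
proof -
  have symH: "transpose H = H" using H by (simp add: sym_pd_def)
  define p where "p = Hi *v a"
  have Hp: "H *v p = a" unfolding p_def
    by (simp add: matrix_vector_mul_assoc Hi)
  have 1: "bf H p p = qsq Hi a"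
    by (simp only: bf_def qsq_def Hp) (simp add: p_def inner_commute)
  have 2: "bf H p b = a \<bullet> b"
    using bf_sym[OF symH, of p b] by (simp add: bf_def Hp inner_commute)
  have "0 \<le> qsq H (c *\<^sub>R p - b)" using psd_of_sym_pd[OF H] .
  also have "\<dots> = c*c* bf H p p - 2*c*bf H p b + bf H b b"
    using bf_sym[OF symH, of p b] by (simp add: qsq_bf algebra_simps)
  finally have "0 \<le> c*c* qsq Hi a - 2*c*(a \<bullet> b) + qsq H b"
    using 1 2 by (simp add: qsq_bf)
  moreover have "c/2 * qsq Hi a + 1/(2*c) * qsq H b - a \<bullet> b
      = (c*c* qsq Hi a - 2*c*(a \<bullet> b) + qsq H b) / (2*c)"
    using c by (simp add: field_simps)
  ultimately have "0 \<le> c/2 * qsq Hi a + 1/(2*c) * qsq H b - a \<bullet> b"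
    using c by simp
  then show ?thesis by simp
qed

lemma real_lin_nonneg:
  fixes a c :: real
  assumes "\<And>\<theta>. 0 < \<theta> \<Longrightarrow> \<theta> \<le> 1 \<Longrightarrow> 0 \<le> \<theta> * a + \<theta>^2 * c"
  shows "0 \<le> a"
proof (rule ccontr)
  assume "\<not> 0 \<le> a" then have a: "a < 0" by simp
  define \<theta> where "\<theta> = min 1 (- a / (2 * \<bar>c\<bar> + 1))"
  have "0 < 2 * \<bar>c\<bar> + 1" by simp
  then have "0 < -a / (2 * \<bar>c\<bar> + 1)" using a by (intro divide_pos_pos) auto
  then have t0: "0 < \<theta>" by (simp add: \<theta>_def)
  have t1: "\<theta> \<le> 1" by (simp add: \<theta>_def)
  have t2: "\<theta> \<le> - a / (2 * \<bar>c\<bar> + 1)" by (simp add: \<theta>_def)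
  have "0 \<le> \<theta> * (a + \<theta> * c)" using assms[OF t0 t1] by (simp add: power2_eq_square algebra_simps)
  then have "0 \<le> a + \<theta> * c" using t0 by (simp add: zero_le_mult_iff)
  moreover have "\<theta> * c \<le> \<theta> * \<bar>c\<bar>" using t0 by (simp add: mult_left_mono)
  moreover have "\<theta> * (2 * \<bar>c\<bar> + 1) \<le> - a"
  proof -
    have p: "0 < 2 * \<bar>c\<bar> + 1" by simp
    show ?thesis using t2 pos_le_divide_eq[OF p, of \<theta> "-a"] by blast
  qed
  ultimately show False using a t0 by (smt (verit) mult_nonneg_nonneg abs_ge_zero distrib_left)
qed

lemma three_point:
  fixes H M :: "real^'n^'n" and g a c p z :: "real^'n"
  assumes symH: "transpose H = H" and symM: "transpose M = M" and X: "convex X"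
    and p: "p \<in> X" and z: "z \<in> X"
    and min: "\<forall>w\<in>X. g \<bullet> p + \<gamma>/2 * qsq H (p - a) + 1/2 * qsq M (p - c)
               \<le> g \<bullet> w + \<gamma>/2 * qsq H (w - a) + 1/2 * qsq M (w - c)"
  shows "g \<bullet> p + \<gamma>/2 * qsq H (p - a) + 1/2 * qsq M (p - c) + \<gamma>/2 * qsq H (z - p) + 1/2 * qsq M (z - p)
         \<le> g \<bullet> z + \<gamma>/2 * qsq H (z - a) + 1/2 * qsq M (z - c)"
proof -
  define q where "q w = g \<bullet> w + \<gamma>/2 * qsq H (w - a) + 1/2 * qsq M (w - c)" for w
  define v where "v = z - p"
  define lin where "lin = g \<bullet> v + \<gamma> * bf H (p - a) v + bf M (p - c) v"
  define Q where "Q = \<gamma> * qsq H v + qsq M v"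
  note sH = bf_sym[OF symH] and sM = bf_sym[OF symM]
  have expand: "q (p + \<theta> *\<^sub>R v) = q p + \<theta> * lin + \<theta>^2 * (Q/2)" for \<theta>
    unfolding q_def lin_def Q_def qsq_bf
    by (simp add: sH sM inner_add_right algebra_simps power2_eq_square)
  have "0 \<le> \<theta> * lin + \<theta>^2 * (Q/2)" if "0 < \<theta>" "\<theta> \<le> 1" for \<theta>
  proof -
    have "(1 - \<theta>) *\<^sub>R p + \<theta> *\<^sub>R z \<in> X"
      using X p z that by (intro convexD) auto
    moreover have "(1 - \<theta>) *\<^sub>R p + \<theta> *\<^sub>R z = p + \<theta> *\<^sub>R v"
      by (simp add: v_def algebra_simps)
    ultimately have "q p \<le> q (p + \<theta> *\<^sub>R v)" using min unfolding q_def by auto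
    then show ?thesis using expand by simp
  qed
  then have "0 \<le> lin" by (rule real_lin_nonneg)
  moreover have "q z = q p + lin + Q/2"
    using expand[of 1] by (simp add: v_def)
  ultimately have "q p + Q/2 \<le> q z" by simp
  then show ?thesis unfolding q_def Q_def v_def by (simp add: add_divide_distrib)
qed

lemma line_deriv:
  fixes f :: "real^'n \<Rightarrow> real"
  assumes "(f has_derivative (\<lambda>h. G \<bullet> h)) (at (x + t *\<^sub>R v))"
  shows "((\<lambda>s. f (x + s *\<^sub>R v)) has_real_derivative (G \<bullet> v)) (at t)"
proof -
  have l: "((\<lambda>s. x + s *\<^sub>R v) has_derivative (\<lambda>h. h *\<^sub>R v)) (at t)"
    by (auto intro!: derivative_eq_intros)
  have "((\<lambda>s. f (x + s *\<^sub>R v)) has_derivative (\<lambda>h. G \<bullet> (h *\<^sub>R v))) (at t)"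
    using has_derivative_compose[OF l assms] by simp
  moreover have "(\<lambda>h. G \<bullet> (h *\<^sub>R v)) = (*) (G \<bullet> v)" by (auto simp: fun_eq_iff)
  ultimately show ?thesis by (simp add: has_field_derivative_def)
qed

lemma grad_ineq:
  fixes f :: "real^'n \<Rightarrow> real"
  assumes cv: "convex_on U f" and U: "open U"
    and der: "\<And>y. y \<in> U \<Longrightarrow> (f has_derivative (\<lambda>h. gf y \<bullet> h)) (at y)"
    and x: "x \<in> U" and z: "z \<in> U"
  shows "f x + gf x \<bullet> (z - x) \<le> f z"
proof -
  define v where "v = z - x"
  define A where "A = (\<lambda>t::real. x + t *\<^sub>R v) -` U"
  define g where "g t = f (x + t *\<^sub>R v)" for t
  have cU: "convex U" using cv by (simp add: convex_on_def)
  have comb: "x + (u * s + w * t) *\<^sub>R v = u *\<^sub>R (x + s *\<^sub>R v) + w *\<^sub>R (x + t *\<^sub>R v)"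
    if "u + w = 1" for u w s t :: real
  proof -
    have e: "u *\<^sub>R x + w *\<^sub>R x = x" using that by (metis scaleR_add_left scaleR_one)
    have "x + (u * s + w * t) *\<^sub>R v = (u *\<^sub>R x + w *\<^sub>R x) + (u * s + w * t) *\<^sub>R v"
      by (simp only: e)
    also have "\<dots> = u *\<^sub>R (x + s *\<^sub>R v) + w *\<^sub>R (x + t *\<^sub>R v)"
      by (simp add: algebra_simps)
    finally show ?thesis .
  qed
  have oA: "open A" unfolding A_def
    by (rule continuous_open_vimage[OF U]) (auto intro!: continuous_intros)
  have cA: "convex A"
  proof (rule convexI)
    fix s t u w :: real assume st: "s \<in> A" "t \<in> A"
      and uw: "0 \<le> u" "0 \<le> w" "u + w = 1"
    then show "u *\<^sub>R s + w *\<^sub>R t \<in> A"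
      using comb[of u w s t] convexD[OF cU, of "x + s *\<^sub>R v" "x + t *\<^sub>R v" u w]
      unfolding A_def by auto
  qed
  have cg: "convex_on A g" unfolding convex_on_def
  proof (intro conjI cA ballI allI impI)
    fix s t u w :: real assume st: "s \<in> A" "t \<in> A" and uw: "0 \<le> u" "0 \<le> w" "u + w = 1"
    have "g (u *\<^sub>R s + w *\<^sub>R t) = f (u *\<^sub>R (x + s *\<^sub>R v) + w *\<^sub>R (x + t *\<^sub>R v))"
      unfolding g_def using comb[OF uw(3), of s t] by simp
    also have "\<dots> \<le> u * f (x + s *\<^sub>R v) + w * f (x + t *\<^sub>R v)"
      using cv st uw unfolding convex_on_def A_def by auto
    finally show "g (u *\<^sub>R s + w *\<^sub>R t) \<le> u * g s + w * g t" by (simp add: g_def)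
  qed
  have A0: "0 \<in> A" and A1: "1 \<in> A" using x z by (auto simp: A_def v_def)
  have "(g has_real_derivative (gf x \<bullet> v)) (at 0)"
    unfolding g_def by (rule line_deriv) (use der x in simp)
  then have dA: "(g has_real_derivative (gf x \<bullet> v)) (at 0 within A)"
    by (rule has_field_derivative_at_within)
  have i0: "0 \<in> interior A" using oA A0 by (simp add: interior_open)
  have "g 1 - g 0 \<ge> (gf x \<bullet> v) * (1 - 0)"
    using convex_on_imp_above_tangent[OF cg convex_connected[OF cA] i0 A1 dA] .
  then show ?thesis by (simp add: g_def v_def)
qed

lemma descent:
  fixes f :: "real^'n \<Rightarrow> real"
  assumes X: "convex X" "X \<subseteq> U" and U: "open U"
    and der: "\<And>y. y \<in> U \<Longrightarrow> (f has_derivative (\<lambda>h. gf y \<bullet> h)) (at y)"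
    and H: "sym_pd H" and \<nu>: "\<nu> > 0"
    and Lip: "\<And>y1 y2. y1 \<in> X \<Longrightarrow> y2 \<in> X \<Longrightarrow>
              qnorm (matrix_inv H) (gf y1 - gf y2) \<le> \<nu> * qnorm H (y1 - y2)"
    and x: "x \<in> X" and z: "z \<in> X"
  shows "f z \<le> f x + gf x \<bullet> (z - x) + \<nu>/2 * qsq H (z - x)"
proof -
  define v where "v = z - x"
  define Hi where "Hi = matrix_inv H"
  have HHi: "H ** Hi = mat 1" unfolding Hi_def by (rule sym_pd_inv[OF H])
  define \<phi> where "\<phi> t = f (x + t *\<^sub>R v) - t * (gf x \<bullet> v) - \<nu>/2 * t^2 * qsq H v" for t
  have qv: "qsq H v \<ge> 0" by (rule psd_of_sym_pd[OF H])
  have inX: "x + t *\<^sub>R v \<in> X" if "0 \<le> t" "t \<le> 1" for t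
  proof -
    have "(1 - t) *\<^sub>R x + t *\<^sub>R z \<in> X" using X(1) x z that by (intro convexD) auto
    moreover have "(1 - t) *\<^sub>R x + t *\<^sub>R z = x + t *\<^sub>R v" by (simp add: v_def algebra_simps)
    ultimately show ?thesis by simp
  qed
  have dn: "\<exists>y. (\<phi> has_real_derivative y) (at t) \<and> y \<le> 0" if t: "0 \<le> t" "t \<le> 1" for t
  proof -
    have xt: "x + t *\<^sub>R v \<in> U" using inX[OF t] X(2) by auto
    have d1: "((\<lambda>s. f (x + s *\<^sub>R v)) has_real_derivative (gf (x + t *\<^sub>R v) \<bullet> v)) (at t)"
      by (rule line_deriv) (rule der[OF xt])
    have d: "(\<phi> has_real_derivative (gf (x + t *\<^sub>R v) \<bullet> v - gf x \<bullet> v - \<nu>/2 * (2 * t) * qsq H v)) (at t)"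
      unfolding \<phi>_def
      by (intro DERIV_diff d1) (auto intro!: derivative_eq_intros)
    define gg where "gg = gf (x + t *\<^sub>R v) - gf x"
    have "qnorm Hi gg \<le> \<nu> * qnorm H (t *\<^sub>R v)"
      unfolding gg_def Hi_def using Lip[OF inX[OF t] x] by simp
    also have "\<nu> * qnorm H (t *\<^sub>R v) = sqrt (\<nu>^2 * t^2 * qsq H v)"
      using \<nu> by (simp add: qnorm_def qsq_bf real_sqrt_mult power2_eq_square)
    finally have L: "qsq Hi gg \<le> \<nu>^2 * t^2 * qsq H v" by (simp add: qnorm_def)
    have "gg \<bullet> v \<le> \<nu> * t * qsq H v"
    proof (cases "t = 0")
      case True then show ?thesis by (simp add: gg_def)
    next
      case False
      then have tp: "t > 0" using t by simp
      have c: "1 / (\<nu> * t) > 0" using tp \<nu> by simp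
      have "gg \<bullet> v \<le> (1/(\<nu>*t))/2 * qsq Hi gg + 1/(2*(1/(\<nu>*t))) * qsq H v"
        by (rule young[OF H HHi c])
      also have "\<dots> \<le> (1/(\<nu>*t))/2 * (\<nu>^2 * t^2 * qsq H v) + 1/(2*(1/(\<nu>*t))) * qsq H v"
        using L c by (intro add_right_mono mult_left_mono) auto
      also have "\<dots> = \<nu> * t * qsq H v" using tp \<nu> by (simp add: field_simps power2_eq_square)
      finally show ?thesis .
    qed
    then have "gf (x + t *\<^sub>R v) \<bullet> v - gf x \<bullet> v - \<nu>/2 * (2 * t) * qsq H v \<le> 0"
      by (simp add: gg_def inner_diff_left)
    with d show ?thesis by blast
  qed
  have "\<phi> 1 \<le> \<phi> 0" using DERIV_nonpos_imp_nonincreasing[of 0 1 \<phi>] dn by force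
  then show ?thesis by (simp add: \<phi>_def v_def)
qed



lemma step_ineq:
  fixes F :: "real^'n \<Rightarrow> real" and H M Hi :: "real^'n^'n"
    and xt xbt xb' xk y hk dt gd xh x' :: "real^'n"
  assumes symM: "transpose M = M" and Mpsd: "\<And>v. qsq M v \<ge> 0" and Hpsd: "\<And>v. qsq H v \<ge> 0"
    and t: "t \<ge> 1" and \<eta>: "\<eta> > 0" "\<eta> * \<nu> < 1" and \<nu>: "\<nu> > 0"
    and bdef: "b = 2/(t+1)" and gdef: "g = 2/(t*\<eta>)"
    and xhd: "xh = b *\<^sub>R xbt + (1 - b) *\<^sub>R xt"
    and x'd: "x' = b *\<^sub>R xb' + (1 - b) *\<^sub>R xt"
    and S: "F x' \<le> F xh + gd \<bullet> (x' - xh) + \<nu>/2 * qsq H (x' - xh)"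
    and C1: "F xh + gd \<bullet> (xt - xh) \<le> F xt"
    and C2: "F xh + gd \<bullet> (y - xh) \<le> F y"
    and T: "(dt + hk) \<bullet> xb' + g/2 * qsq H (xb' - xbt) + 1/2 * qsq M (xb' - xk)
              + g/2 * qsq H (y - xb') + 1/2 * qsq M (y - xb')
            \<le> (dt + hk) \<bullet> y + g/2 * qsq H (y - xbt) + 1/2 * qsq M (y - xk)"
    and Y: "(gd - dt) \<bullet> (xb' - xbt) \<le> (t*\<eta>/(2*(1-\<eta>*\<nu>)))/2 * qsq Hi (gd - dt)
              + 1/(2*(t*\<eta>/(2*(1-\<eta>*\<nu>)))) * qsq H (xb' - xbt)"
  shows "(F x' + hk \<bullet> x' + 1/2 * qsq M (x' - xk)) - (F y + hk \<bullet> y + 1/2 * qsq M (y - xk))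
            + 1/2 * qsq M (y - x')
         \<le> (1 - b) * ((F xt + hk \<bullet> xt + 1/2 * qsq M (xt - xk)) - (F y + hk \<bullet> y + 1/2 * qsq M (y - xk))
            + 1/2 * qsq M (y - xt))
          + b * ((gd - dt) \<bullet> (xbt - y) + g/2 * (qsq H (y - xbt) - qsq H (y - xb'))
                 + t * \<eta> / (4 * (1 - \<eta> * \<nu>)) * qsq Hi (gd - dt))"
proof -
  note sM = bf_sym[OF symM]
  define \<Delta> where "\<Delta> = xb' - xbt"
  define \<delta> where "\<delta> = gd - dt"
  have b0: "0 < b" "b \<le> 1" using t by (auto simp: bdef field_simps)
  have a: "x' - xh = b *\<^sub>R \<Delta>" by (simp add: x'd xhd \<Delta>_def algebra_simps)
  have qa: "qsq H (x' - xh) = b^2 * qsq H \<Delta>" by (simp add: a qsq_bf power2_eq_square)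
  have q1: "qsq M (x' - xk) = b * qsq M (xb' - xk) + (1-b) * qsq M (xt - xk) - b*(1-b) * qsq M (xb' - xt)"
    by (simp add: x'd qsq_bf sM algebra_simps power2_eq_square)
  have q2: "qsq M (y - x') = b * qsq M (y - xb') + (1-b) * qsq M (y - xt) - b*(1-b) * qsq M (xb' - xt)"
    by (simp add: x'd qsq_bf sM algebra_simps power2_eq_square)
  have q3: "b*(1-b) * qsq M (xb' - xt) \<ge> 0" using b0 Mpsd by simp
  have l1: "gd \<bullet> (x' - xh) = (1-b) * (gd \<bullet> (xt - xh)) + b * (gd \<bullet> (xb' - xh))"
    by (simp add: x'd inner_diff_right inner_add_right algebra_simps)
  have l2: "hk \<bullet> x' = b * (hk \<bullet> xb') + (1-b) * (hk \<bullet> xt)"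
    by (simp add: x'd inner_add_right)
  define P2 where "P2 = F xh + gd \<bullet> (xb' - xh)"
  define R2 where "R2 = F y + \<delta> \<bullet> (xbt - y) + g/2 * qsq H (y - xbt) - g/2 * qsq H (y - xb')
      + (\<delta> \<bullet> \<Delta> - g/2 * qsq H \<Delta>) + hk \<bullet> y - hk \<bullet> xb' + 1/2 * qsq M (y - xk)
      - 1/2 * qsq M (xb' - xk) - 1/2 * qsq M (y - xb')"
  have "P2 = (F xh + gd \<bullet> (y - xh)) + \<delta> \<bullet> \<Delta> + \<delta> \<bullet> (xbt - y) + dt \<bullet> (xb' - y)"
    by (simp add: P2_def \<delta>_def \<Delta>_def inner_diff_right inner_diff_left)
  moreover have "dt \<bullet> (xb' - y) \<le> hk \<bullet> y - hk \<bullet> xb' + g/2 * qsq H (y - xbt) - g/2 * qsq H (y - xb')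
      - g/2 * qsq H \<Delta> + 1/2 * qsq M (y - xk) - 1/2 * qsq M (xb' - xk) - 1/2 * qsq M (y - xb')"
    using T by (simp add: \<Delta>_def inner_diff_right inner_add_left)
  ultimately have P2R2: "P2 \<le> R2" using C2 unfolding R2_def by linarith
  have c0: "0 < 1 - \<eta> * \<nu>" using \<eta> by simp
  have coef: "1/(2*(t*\<eta>/(2*(1-\<eta>*\<nu>)))) \<le> g/2 - \<nu> * b/2"
  proof -
    have "1/(2*(t*\<eta>/(2*(1-\<eta>*\<nu>)))) = 1/(t*\<eta>) - \<nu>/t" using t \<eta> c0 by (simp add: field_simps)
    moreover have "\<nu>/(t+1) \<le> \<nu>/t" using t \<nu> by (intro divide_left_mono) auto
    moreover have "g/2 = 1/(t*\<eta>)" by (simp add: gdef)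
    moreover have "\<nu>*b/2 = \<nu>/(t+1)" using t by (simp add: bdef field_simps)
    ultimately show ?thesis by linarith
  qed
  have Y2: "\<delta> \<bullet> \<Delta> \<le> t * \<eta> / (4 * (1 - \<eta> * \<nu>)) * qsq Hi \<delta> + (g/2 - \<nu> * b/2) * qsq H \<Delta>"
  proof -
    have e1: "(t*\<eta>/(2*(1-\<eta>*\<nu>)))/2 * qsq Hi \<delta> = t * \<eta> / (4 * (1 - \<eta> * \<nu>)) * qsq Hi \<delta>" by simp
    have i1: "1/(2*(t*\<eta>/(2*(1-\<eta>*\<nu>)))) * qsq H \<Delta> \<le> (g/2 - \<nu> * b/2) * qsq H \<Delta>"
      using coef Hpsd by (intro mult_right_mono) auto
    have "\<delta> \<bullet> \<Delta> \<le> (t*\<eta>/(2*(1-\<eta>*\<nu>)))/2 * qsq Hi \<delta> + 1/(2*(t*\<eta>/(2*(1-\<eta>*\<nu>)))) * qsq H \<Delta>"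
      using Y unfolding \<delta>_def \<Delta>_def .
    also have "\<dots> = t * \<eta> / (4 * (1 - \<eta> * \<nu>)) * qsq Hi \<delta> + 1/(2*(t*\<eta>/(2*(1-\<eta>*\<nu>)))) * qsq H \<Delta>"
      by (simp only: e1)
    also have "\<dots> \<le> t * \<eta> / (4 * (1 - \<eta> * \<nu>)) * qsq Hi \<delta> + (g/2 - \<nu> * b/2) * qsq H \<Delta>"
      using i1 by (rule add_left_mono)
    finally show ?thesis .
  qed
  have m1: "(1-b) * (F xh + gd \<bullet> (xt - xh)) \<le> (1-b) * F xt" using C1 b0 by (intro mult_left_mono) auto
  have m2: "b * P2 \<le> b * R2" using P2R2 b0 by (intro mult_left_mono) auto
  define c' where "c' = t * \<eta> / (4 * (1 - \<eta> * \<nu>))"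
  have m3: "b * (\<delta> \<bullet> \<Delta>) \<le> b * (c' * qsq Hi \<delta> + (g/2 - \<nu> * b/2) * qsq H \<Delta>)"
    using Y2 b0 unfolding c'_def by (intro mult_left_mono) auto
  define R2' where "R2' = F y + \<delta> \<bullet> (xbt - y) + g/2 * qsq H (y - xbt) - g/2 * qsq H (y - xb')
      + hk \<bullet> y - hk \<bullet> xb' + 1/2 * qsq M (y - xk)
      - 1/2 * qsq M (xb' - xk) - 1/2 * qsq M (y - xb')"
  have e2: "F xh + gd \<bullet> (x' - xh) + \<nu>/2 * (b^2 * qsq H \<Delta>) = (1-b) * (F xh + gd \<bullet> (xt - xh)) + b * P2 + \<nu>/2 * (b^2 * qsq H \<Delta>)"
    unfolding l1 P2_def by (simp add: algebra_simps)
  have e3: "b * R2 + \<nu>/2 * (b^2 * qsq H \<Delta>)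
       = b * R2' + b * (\<delta> \<bullet> \<Delta>) - b * ((g/2 - \<nu> * b/2) * qsq H \<Delta>)"
    unfolding R2_def R2'_def by (simp add: algebra_simps power2_eq_square)
  have m3': "b * (\<delta> \<bullet> \<Delta>) \<le> b * (c' * qsq Hi \<delta>) + b * ((g/2 - \<nu> * b/2) * qsq H \<Delta>)"
    using m3 by (simp only: distrib_left)
  have star: "F x' \<le> (1-b) * F xt + (b * R2' + b * (c' * qsq Hi \<delta>))"
  proof -
    have "F x' \<le> F xh + gd \<bullet> (x' - xh) + \<nu>/2 * (b^2 * qsq H \<Delta>)" using S qa by simp
    also have "\<dots> = (1-b) * (F xh + gd \<bullet> (xt - xh)) + b * P2 + \<nu>/2 * (b^2 * qsq H \<Delta>)" by (rule e2)
    also have "\<dots> \<le> (1-b) * F xt + b * R2 + \<nu>/2 * (b^2 * qsq H \<Delta>)" using m1 m2 by linarith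
    finally show ?thesis using e3 m3' by linarith
  qed
  define E where "E = (1-b) * F xt + (b * R2' + b * (c' * qsq Hi \<delta>)) + (b * (hk \<bullet> xb') + (1-b) * (hk \<bullet> xt))
     + 1/2 * (b * qsq M (xb' - xk) + (1-b) * qsq M (xt - xk) - b*(1-b) * qsq M (xb' - xt))
     - (F y + hk \<bullet> y + 1/2 * qsq M (y - xk))
     + 1/2 * (b * qsq M (y - xb') + (1-b) * qsq M (y - xt) - b*(1-b) * qsq M (xb' - xt))"
  have "(F x' + hk \<bullet> x' + 1/2 * qsq M (x' - xk)) - (F y + hk \<bullet> y + 1/2 * qsq M (y - xk))
            + 1/2 * qsq M (y - x') \<le> E"
    unfolding E_def q1 q2 l2 using star by linarith
  also have "E \<le> (1 - b) * ((F xt + hk \<bullet> xt + 1/2 * qsq M (xt - xk)) - (F y + hk \<bullet> y + 1/2 * qsq M (y - xk))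
            + 1/2 * qsq M (y - xt))
          + b * ((gd - dt) \<bullet> (xbt - y) + g/2 * (qsq H (y - xbt) - qsq H (y - xb'))
                 + t * \<eta> / (4 * (1 - \<eta> * \<nu>)) * qsq Hi (gd - dt))"
  proof -
    have "(1 - b) * ((F xt + hk \<bullet> xt + 1/2 * qsq M (xt - xk)) - (F y + hk \<bullet> y + 1/2 * qsq M (y - xk))
            + 1/2 * qsq M (y - xt))
          + b * ((gd - dt) \<bullet> (xbt - y) + g/2 * (qsq H (y - xbt) - qsq H (y - xb'))
                 + t * \<eta> / (4 * (1 - \<eta> * \<nu>)) * qsq Hi (gd - dt)) - E
          = b*(1-b) * qsq M (xb' - xt)"
      unfolding E_def R2'_def c'_def \<delta>_def by (simp add: algebra_simps add_divide_distrib diff_divide_distrib)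
    then show ?thesis using q3 by linarith
  qed
  finally show ?thesis .
qed



lemma inner_transp: "x \<bullet> (transpose A *v w) = (A *v x) \<bullet> (w :: real^'m)"
  for A :: "real^'n^'m"
  by (metis dot_lmul_matrix inner_commute transpose_matrix_vector)

lemma vm_inner1: "(w v* A) \<bullet> x = w \<bullet> (A *v x)" for A :: "real^'n^'m"
  by (rule dot_lmul_matrix)
lemma vm_inner2: "x \<bullet> (w v* A) = w \<bullet> (A *v x)" for A :: "real^'n^'m"
  by (metis dot_lmul_matrix inner_commute)

lemma qsq_D: "qsq (M - \<beta> *\<^sub>R (transpose A ** A)) v = qsq M v - \<beta> * ((A *v v) \<bullet> (A *v v))"
  by (simp add: qsq_bf bf_mdiff bf_mscale bf_AtA)

lemma alm_alg:
  fixes A :: "real^'n1^'n" and M :: "real^'n1^'n1" and y x1 xk :: "real^'n1" and b \<mu> lk :: "real^'n"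
  assumes symM: "transpose M = M" and \<beta>: "\<beta> > 0" and s: "s > 0"
    and hyp: "\<zeta> \<le> Fy - Fx1 + ((transpose A *v (\<beta> *\<^sub>R (A *v xk - b) - lk)) \<bullet> y
                 - (transpose A *v (\<beta> *\<^sub>R (A *v xk - b) - lk)) \<bullet> x1)
               + 1/2 * qsq M (y - xk) - 1/2 * qsq M (x1 - xk) - 1/2 * qsq M (y - x1)"
  shows "Fy - Fx1
         + ((y - x1) \<bullet> (- (transpose A *v \<mu>)) + (\<mu> - (lk - \<beta> *\<^sub>R (A *v x1 - b))) \<bullet> (A *v y - b))
       \<ge> 1/2 * ( (qsq (M - \<beta> *\<^sub>R (transpose A ** A)) (y - x1) + 1 / (s * \<beta>) * norm (\<mu> - (lk - (s * \<beta>) *\<^sub>R (A *v x1 - b)))^2)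
                 - (qsq (M - \<beta> *\<^sub>R (transpose A ** A)) (y - xk) + 1 / (s * \<beta>) * norm (\<mu> - lk)^2)
                 + (qsq (M - \<beta> *\<^sub>R (transpose A ** A)) (xk - x1) + (2 - s) / \<beta> * norm (lk - (lk - \<beta> *\<^sub>R (A *v x1 - b)))^2) )
         + \<zeta>"
proof -
  note sM = bf_sym[OF symM]
  define P where "P = A *v y - b"
  define Q where "Q = A *v x1 - b"
  define R where "R = A *v xk - b"
  define w where "w = \<mu> - lk"
  have AyP: "A *v y = P + b" and Ax1: "A *v x1 = Q + b" and Axk: "A *v xk = R + b"
    by (simp_all add: P_def Q_def R_def)
  have Ad: "A *v (u - v) = A *v u - A *v v" for u v by (simp add: matrix_vector_mult_diff_distrib)
  have mq: "1/2 * qsq M (y - xk) - 1/2 * qsq M (x1 - xk) - 1/2 * qsq M (y - x1)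
      = 1/2 * qsq M (xk - x1) - 1/2 * qsq M (y - x1) + 1/2 * qsq M (y - xk) - qsq M (xk - x1)"
    by (simp add: qsq_bf sM algebra_simps)
  have n1: "norm (\<mu> - (lk - (s * \<beta>) *\<^sub>R Q))^2 = norm w ^2 + 2 * (s*\<beta>) * (w \<bullet> Q) + (s*\<beta>)^2 * (Q \<bullet> Q)"
    unfolding power2_norm_eq_inner w_def by (simp add: inner_add_left inner_add_right inner_diff_left inner_diff_right
        algebra_simps power2_eq_square inner_commute)
  have n2: "norm (lk - (lk - \<beta> *\<^sub>R Q))^2 = \<beta>^2 * (Q \<bullet> Q)"
    by (simp add: power2_eq_square flip: power2_norm_eq_inner)
  have lam: "1 / (s * \<beta>) * (norm w ^2 + 2 * (s*\<beta>) * (w \<bullet> Q) + (s*\<beta>)^2 * (Q \<bullet> Q)) - 1 / (s * \<beta>) * norm w^2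
        + (2 - s) / \<beta> * (\<beta>^2 * (Q \<bullet> Q)) = 2 * (w \<bullet> Q) + 2 * \<beta> * (Q \<bullet> Q)"
    using \<beta> s by (simp add: field_simps power2_eq_square)
  have key: "(y - x1) \<bullet> (- (transpose A *v \<mu>)) + (\<mu> - (lk - \<beta> *\<^sub>R Q)) \<bullet> P
     + \<beta>/2 * ((A *v (y - x1)) \<bullet> (A *v (y - x1)) - (A *v (y - xk)) \<bullet> (A *v (y - xk)) + (A *v (xk - x1)) \<bullet> (A *v (xk - x1)))
     - 1/2 * (2 * (w \<bullet> Q) + 2 * \<beta> * (Q \<bullet> Q))
     = (transpose A *v (\<beta> *\<^sub>R R - lk)) \<bullet> y - (transpose A *v (\<beta> *\<^sub>R R - lk)) \<bullet> x1"
    unfolding w_def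
    by (simp add: vm_inner1 vm_inner2 Ad AyP Ax1 Axk inner_add_left inner_add_right inner_diff_left inner_diff_right algebra_simps inner_commute)
  show ?thesis
    using hyp key lam mq
    unfolding qsq_D P_def[symmetric] Q_def[symmetric] R_def[symmetric] n1 n2 w_def[symmetric]
    by (simp add: algebra_simps)
qed



lemma avg_upper:
  fixes a c :: "nat \<Rightarrow> real" and g :: "nat \<Rightarrow> real^'n"
  assumes N: "N \<ge> 1" and h: "\<And>j. j \<in> {1..N} \<Longrightarrow> a j \<le> c j + g j \<bullet> v + K"
  shows "(1 / real N) * (\<Sum>j=1..N. a j) \<le> (1 / real N) * (\<Sum>j=1..N. c j) + ((1 / real N) *\<^sub>R (\<Sum>j=1..N. g j)) \<bullet> v + K"
proof -
  have "(\<Sum>j=1..N. a j) \<le> (\<Sum>j=1..N. c j + g j \<bullet> v + K)" by (rule sum_mono) (rule h)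
  also have "\<dots> = (\<Sum>j=1..N. c j) + (\<Sum>j=1..N. g j) \<bullet> v + real N * K"
    by (simp add: sum.distrib inner_sum_left)
  finally have "(1 / real N) * (\<Sum>j=1..N. a j) \<le> (1 / real N) * ((\<Sum>j=1..N. c j) + (\<Sum>j=1..N. g j) \<bullet> v + real N * K)"
    using N by (intro mult_left_mono) auto
  also have "\<dots> = (1 / real N) * (\<Sum>j=1..N. c j) + ((1 / real N) *\<^sub>R (\<Sum>j=1..N. g j)) \<bullet> v + K"
    using N by (simp add: algebra_simps)
  finally show ?thesis .
qed

lemma avg_lower:
  fixes a c :: "nat \<Rightarrow> real" and g :: "nat \<Rightarrow> real^'n"
  assumes N: "N \<ge> 1" and h: "\<And>j. j \<in> {1..N} \<Longrightarrow> c j + g j \<bullet> v \<le> a j"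
  shows "(1 / real N) * (\<Sum>j=1..N. c j) + ((1 / real N) *\<^sub>R (\<Sum>j=1..N. g j)) \<bullet> v \<le> (1 / real N) * (\<Sum>j=1..N. a j)"
proof -
  have "(\<Sum>j=1..N. c j) + (\<Sum>j=1..N. g j) \<bullet> v = (\<Sum>j=1..N. c j + g j \<bullet> v)"
    by (simp add: sum.distrib inner_sum_left)
  also have "\<dots> \<le> (\<Sum>j=1..N. a j)" by (rule sum_mono) (rule h)
  finally have "(1 / real N) * ((\<Sum>j=1..N. c j) + (\<Sum>j=1..N. g j) \<bullet> v) \<le> (1 / real N) * (\<Sum>j=1..N. a j)"
    using N by (intro mult_left_mono) auto
  then show ?thesis by (simp add: algebra_simps)
qed

lemma telescope:
  fixes V P Q Rr :: "nat \<Rightarrow> real"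
  assumes \<eta>: "\<eta> > 0"
    and step: "\<And>t. 1 \<le> t \<Longrightarrow> t \<le> m \<Longrightarrow> V (Suc t) \<le> (1 - betaI t) * V t
       + betaI t * (P t + gammaI \<eta> t / 2 * (Q t - Q (Suc t)) + Rr t)"
  shows "t \<le> m \<Longrightarrow> real t * (real t + 1) / 2 * V (Suc t)
           \<le> (\<Sum>s=1..t. real s * P s + real s * Rr s) + 1 / \<eta> * (Q 1 - Q (Suc t))"
proof (induction t)
  case 0 then show ?case by simp
next
  case (Suc t)
  define T where "T = real t"
  have T0: "T \<ge> 0" by (simp add: T_def)
  have st: "V (Suc (Suc t)) \<le> (1 - betaI (Suc t)) * V (Suc t)
       + betaI (Suc t) * (P (Suc t) + gammaI \<eta> (Suc t) / 2 * (Q (Suc t) - Q (Suc (Suc t))) + Rr (Suc t))"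
    using step[of "Suc t"] Suc.prems by simp
  have "real (Suc t) * (real (Suc t) + 1) / 2 * V (Suc (Suc t))
     \<le> real (Suc t) * (real (Suc t) + 1) / 2 * ((1 - betaI (Suc t)) * V (Suc t)
       + betaI (Suc t) * (P (Suc t) + gammaI \<eta> (Suc t) / 2 * (Q (Suc t) - Q (Suc (Suc t))) + Rr (Suc t)))"
    using st by (intro mult_left_mono) auto
  also have "\<dots> = real t * (real t + 1) / 2 * V (Suc t)
      + (real (Suc t) * P (Suc t) + real (Suc t) * Rr (Suc t) + 1 / \<eta> * (Q (Suc t) - Q (Suc (Suc t))))"
  proof -
    define K where "K = real (Suc t) * (real (Suc t) + 1) / 2"
    define B where "B = P (Suc t) + gammaI \<eta> (Suc t) / 2 * (Q (Suc t) - Q (Suc (Suc t))) + Rr (Suc t)"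
    have e1: "K * (1 - betaI (Suc t)) = real t * (real t + 1) / 2"
      unfolding K_def betaI_def by (simp add: field_simps)
    have e2: "K * betaI (Suc t) = real (Suc t)"
      unfolding K_def betaI_def by (simp add: field_simps)
    have e3: "real (Suc t) * (gammaI \<eta> (Suc t) / 2) = 1 / \<eta>"
    proof -
      have n: "real (Suc t) \<noteq> 0" by simp
      have "gammaI \<eta> (Suc t) / 2 = 1 / (real (Suc t) * \<eta>)" unfolding gammaI_def by simp
      then show ?thesis using n \<eta> by simp
    qed
    have "K * ((1 - betaI (Suc t)) * V (Suc t) + betaI (Suc t) * B)
        = (K * (1 - betaI (Suc t))) * V (Suc t) + (K * betaI (Suc t)) * B" by (simp add: algebra_simps)
    also have "\<dots> = real t * (real t + 1) / 2 * V (Suc t) + real (Suc t) * B" by (simp only: e1 e2)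
    also have "real (Suc t) * B = real (Suc t) * P (Suc t) + (real (Suc t) * (gammaI \<eta> (Suc t) / 2)) * (Q (Suc t) - Q (Suc (Suc t)))
        + real (Suc t) * Rr (Suc t)" unfolding B_def by (simp add: algebra_simps)
    finally show ?thesis unfolding K_def B_def e3 by simp
  qed
  also have "\<dots> \<le> (\<Sum>s=1..t. real s * P s + real s * Rr s) + 1 / \<eta> * (Q 1 - Q (Suc t))
      + (real (Suc t) * P (Suc t) + real (Suc t) * Rr (Suc t) + 1 / \<eta> * (Q (Suc t) - Q (Suc (Suc t))))"
    using Suc.IH Suc.prems by simp
  also have "\<dots> = (\<Sum>s=1..Suc t. real s * P s + real s * Rr s) + 1 / \<eta> * (Q 1 - Q (Suc (Suc t)))"
    by (simp add: algebra_simps)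
  finally show ?case .
qed



theorem theorem4p3:
  fixes X :: "(real^'n1) set" and U :: "(real^'n1) set"
    and A :: "real^'n1^'n" and b :: "real^'n"
    and N :: nat and f :: "nat \<Rightarrow> real^'n1 \<Rightarrow> real" and gf :: "nat \<Rightarrow> real^'n1 \<Rightarrow> real^'n1"
    and H :: "real^'n1^'n1" and \<nu> :: real
    and \<beta> :: real and s :: real
    and m :: "nat \<Rightarrow> nat" and \<eta> :: "nat \<Rightarrow> real" and M :: "nat \<Rightarrow> real^'n1^'n1"
    and \<xi> :: "nat \<Rightarrow> nat \<Rightarrow> nat" and e :: "nat \<Rightarrow> nat \<Rightarrow> real^'n1"
    and x :: "nat \<Rightarrow> real^'n1" and xb :: "nat \<Rightarrow> real^'n1" and lam :: "nat \<Rightarrow> real^'n"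
    and xi :: "nat \<Rightarrow> nat \<Rightarrow> real^'n1" and xbi :: "nat \<Rightarrow> nat \<Rightarrow> real^'n1"
    and xh :: "nat \<Rightarrow> nat \<Rightarrow> real^'n1" and d :: "nat \<Rightarrow> nat \<Rightarrow> real^'n1"
    and k :: nat
  assumes X: "X \<noteq> {}" "closed X" "convex X"
    and U: "open U" "X \<subseteq> U"
    and N: "N \<ge> 1"
    and fconv: "\<And>j. j \<in> {1..N} \<Longrightarrow> convex_on U (f j)"
    and fgrad: "\<And>j y. j \<in> {1..N} \<Longrightarrow> y \<in> U \<Longrightarrow> (f j has_derivative (\<lambda>h. gf j y \<bullet> h)) (at y)"
    and fC1: "\<And>j. j \<in> {1..N} \<Longrightarrow> continuous_on U (gf j)"
    and H: "sym_pd H" and \<nu>: "\<nu> > 0"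
    and Lip: "\<And>j y1 y2. j \<in> {1..N} \<Longrightarrow> y1 \<in> X \<Longrightarrow> y2 \<in> X \<Longrightarrow>
              qnorm (matrix_inv H) (gf j y1 - gf j y2) \<le> \<nu> * qnorm H (y1 - y2)"
    and \<beta>: "\<beta> > 0" and s: "0 < s" "s \<le> 2"
    and mk: "\<And>l. m l \<ge> 1" and \<eta>pos: "\<And>l. \<eta> l > 0"
    and Msym: "\<And>l. transpose (M l) = M l"
    and Dpsd: "\<And>l. psd (M l - \<beta> *\<^sub>R (transpose A ** A))"
    and x0: "x 0 \<in> X" and xb0: "xb 0 = x 0"
    and \<xi>: "\<And>l t. \<xi> l t \<in> {1..N}"
    and in1: "\<And>l. xi l 1 = x l" "\<And>l. xbi l 1 = xb l"
    and xh: "\<And>l t. xh l t = betaI t *\<^sub>R xbi l t + (1 - betaI t) *\<^sub>R xi l t"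
    and dd: "\<And>l t. d l t = gf (\<xi> l t) (xh l t) + e l t"
    and xbstep: "\<And>l t. 1 \<le> t \<Longrightarrow> t \<le> m l \<Longrightarrow>
        xbi l (Suc t) \<in> X \<and>
        (\<forall>z\<in>X. (d l t + transpose A *v (\<beta> *\<^sub>R (A *v x l - b) - lam l)) \<bullet> xbi l (Suc t)
                  + gammaI (\<eta> l) t / 2 * qsq H (xbi l (Suc t) - xbi l t)
                  + 1/2 * qsq (M l) (xbi l (Suc t) - x l)
               \<le> (d l t + transpose A *v (\<beta> *\<^sub>R (A *v x l - b) - lam l)) \<bullet> z
                  + gammaI (\<eta> l) t / 2 * qsq H (z - xbi l t)
                  + 1/2 * qsq (M l) (z - x l))"
    and xstep: "\<And>l t. 1 \<le> t \<Longrightarrow> t \<le> m l \<Longrightarrow>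
        xi l (Suc t) = betaI t *\<^sub>R xbi l (Suc t) + (1 - betaI t) *\<^sub>R xi l t"
    and out: "\<And>l. x (Suc l) = xi l (m l + 1)" "\<And>l. xb (Suc l) = xbi l (m l + 1)"
    and lamstep: "\<And>l. lam (Suc l) = lam l - (s * \<beta>) *\<^sub>R (A *v x (Suc l) - b)"
    and \<eta>k: "\<eta> k < 1 / \<nu>"
  shows "\<forall>y\<in>X. \<forall>\<mu>::real^'n.
    let F = (\<lambda>z. (1 / real N) * (\<Sum>j=1..N. f j z));
        gF = (\<lambda>z. (1 / real N) *\<^sub>R (\<Sum>j=1..N. gf j z));
        \<delta> = (\<lambda>t. gF (xh k t) - d k t);
        D = M k - \<beta> *\<^sub>R (transpose A ** A);
        lt = lam k - \<beta> *\<^sub>R (A *v x (Suc k) - b);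
        \<zeta> = 2 / (real (m k) * (real (m k) + 1)) *
             ( 1 / \<eta> k * (qsq H (y - xb (Suc k)) - qsq H (y - xb k))
               - (\<Sum>t=1..m k. real t * (\<delta> t \<bullet> (xbi k t - y)))
               - \<eta> k / (4 * (1 - \<eta> k * \<nu>)) * (\<Sum>t=1..m k. (real t)^2 * qsq (matrix_inv H) (\<delta> t)))
    in F y - F (x (Suc k))
         + ((y - x (Suc k)) \<bullet> (- (transpose A *v \<mu>)) + (\<mu> - lt) \<bullet> (A *v y - b))
       \<ge> 1/2 * ( (qsq D (y - x (Suc k)) + 1 / (s * \<beta>) * norm (\<mu> - lam (Suc k))^2)
                 - (qsq D (y - x k) + 1 / (s * \<beta>) * norm (\<mu> - lam k)^2)
                 + (qsq D (x k - x (Suc k)) + (2 - s) / \<beta> * norm (lam k - lt)^2) )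
         + \<zeta>"
proof (intro ballI allI)
  fix y and \<mu> :: "real^'n"
  assume yX: "y \<in> X"
  define F where "F = (\<lambda>z. (1 / real N) * (\<Sum>j=1..N. f j z))"
  define gF where "gF = (\<lambda>z. (1 / real N) *\<^sub>R (\<Sum>j=1..N. gf j z))"
  define \<delta> where "\<delta> = (\<lambda>t. gF (xh k t) - d k t)"
  define D where "D = M k - \<beta> *\<^sub>R (transpose A ** A)"
  define lt where "lt = lam k - \<beta> *\<^sub>R (A *v x (Suc k) - b)"
  define \<zeta> where "\<zeta> = 2 / (real (m k) * (real (m k) + 1)) *
             ( 1 / \<eta> k * (qsq H (y - xb (Suc k)) - qsq H (y - xb k))
               - (\<Sum>t=1..m k. real t * (\<delta> t \<bullet> (xbi k t - y)))
               - \<eta> k / (4 * (1 - \<eta> k * \<nu>)) * (\<Sum>t=1..m k. (real t)^2 * qsq (matrix_inv H) (\<delta> t)))"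
  define Hi where "Hi = matrix_inv H"
  define hk where "hk = transpose A *v (\<beta> *\<^sub>R (A *v x k - b) - lam k)"
  define \<Psi> where "\<Psi> z = F z + hk \<bullet> z + 1/2 * qsq (M k) (z - x k)" for z
  define V where "V t = \<Psi> (xi k t) - \<Psi> y + 1/2 * qsq (M k) (y - xi k t)" for t
  have symH: "transpose H = H" using H by (simp add: sym_pd_def)
  have HHi: "H ** Hi = mat 1" unfolding Hi_def by (rule sym_pd_inv[OF H])
  have Hpsd: "\<And>v. qsq H v \<ge> 0" by (rule psd_of_sym_pd[OF H])
  have Mpsd: "\<And>v. qsq (M k) v \<ge> 0"
  proof -
    fix v
    have "qsq (M k - \<beta> *\<^sub>R (transpose A ** A)) v \<ge> 0" using Dpsd by (simp add: psd_def)
    moreover have "\<beta> * ((A *v v) \<bullet> (A *v v)) \<ge> 0" using \<beta> by simp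
    ultimately show "qsq (M k) v \<ge> 0" unfolding qsq_D by linarith
  qed
  have bI: "0 \<le> betaI t \<and> betaI t \<le> 1" if "1 \<le> t" for t
    using that by (simp add: betaI_def field_simps)
  have inner: "xi l t \<in> X \<and> xbi l t \<in> X"
    if a: "x l \<in> X" "xb l \<in> X" and tt: "1 \<le> t" "t \<le> m l + 1" for l t
    using tt
  proof (induction t)
    case 0 thus ?case by simp
  next
    case (Suc t)
    show ?case
    proof (cases "t = 0")
      case True thus ?thesis using in1 a by simp
    next
      case False
      then have t1: "1 \<le> t" "t \<le> m l" using Suc.prems by auto
      have ih: "xi l t \<in> X \<and> xbi l t \<in> X" using Suc.IH t1 by simp
      have xb': "xbi l (Suc t) \<in> X" using xbstep[OF t1] by blast
      have "betaI t *\<^sub>R xbi l (Suc t) + (1 - betaI t) *\<^sub>R xi l t \<in> X"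
        using convexD[OF X(3) xb', of "xi l t" "betaI t" "1 - betaI t"] ih bI[OF t1(1)] by simp
      thus ?thesis using xstep[OF t1] xb' by simp
    qed
  qed
  have outer: "x l \<in> X \<and> xb l \<in> X" for l
  proof (induction l)
    case 0 thus ?case using x0 xb0 by simp
  next
    case (Suc l)
    thus ?case using inner[of l "m l + 1"] out[of l] by simp
  qed
  have memk: "xi k t \<in> X \<and> xbi k t \<in> X" if "1 \<le> t" "t \<le> m k + 1" for t
    using inner[OF conjunct1[OF outer] conjunct2[OF outer] that] .
  have xhX: "xh k t \<in> X" if t: "1 \<le> t" "t \<le> m k" for t
  proof -
    have "betaI t *\<^sub>R xbi k t + (1 - betaI t) *\<^sub>R xi k t \<in> X"
      using convexD[OF X(3), of "xbi k t" "xi k t" "betaI t" "1 - betaI t"] memk[of t] t bI[OF t(1)] by simp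
    thus ?thesis using xh by simp
  qed
  have derj: "\<And>j y. j \<in> {1..N} \<Longrightarrow> y \<in> U \<Longrightarrow> (f j has_derivative (\<lambda>h. gf j y \<bullet> h)) (at y)"
    using fgrad by blast
  have Fdesc: "F z \<le> F u + gF u \<bullet> (z - u) + \<nu>/2 * qsq H (z - u)" if uz: "u \<in> X" "z \<in> X" for u z
  proof -
    have "f j z \<le> f j u + gf j u \<bullet> (z - u) + \<nu>/2 * qsq H (z - u)" if j: "j \<in> {1..N}" for j
      by (rule descent[OF X(3) U(2) U(1) fgrad[OF j] H \<nu> Lip[OF j] uz])
    then show ?thesis unfolding F_def gF_def by (rule avg_upper[OF N])
  qed
  have Fconv: "F u + gF u \<bullet> (z - u) \<le> F z" if "u \<in> X" "z \<in> X" for u z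
  proof -
    have "f j u + gf j u \<bullet> (z - u) \<le> f j z" if j: "j \<in> {1..N}" for j
      by (rule grad_ineq[OF fconv[OF j] U(1) fgrad[OF j]]) (use \<open>u \<in> X\<close> \<open>z \<in> X\<close> U(2) in auto)
    then show ?thesis unfolding F_def gF_def by (rule avg_lower[OF N])
  qed
  have \<eta>0: "\<eta> k > 0" by (rule \<eta>pos)
  have \<eta>\<nu>: "\<eta> k * \<nu> < 1" using \<eta>k \<nu> by (simp add: field_simps)
  have step: "V (Suc t) \<le> (1 - betaI t) * V t + betaI t * (\<delta> t \<bullet> (xbi k t - y)
       + gammaI (\<eta> k) t / 2 * (qsq H (y - xbi k t) - qsq H (y - xbi k (Suc t)))
       + real t * \<eta> k / (4 * (1 - \<eta> k * \<nu>)) * qsq Hi (\<delta> t))"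
    if t: "1 \<le> t" "t \<le> m k" for t
  proof -
    have m1: "xi k t \<in> X" "xbi k t \<in> X" using memk[of t] t by auto
    have m2: "xi k (Suc t) \<in> X" "xbi k (Suc t) \<in> X" using memk[of "Suc t"] t by auto
    have m3: "xh k t \<in> X" using xhX t by auto
    have T: "(d k t + hk) \<bullet> xbi k (Suc t) + gammaI (\<eta> k) t/2 * qsq H (xbi k (Suc t) - xbi k t)
          + 1/2 * qsq (M k) (xbi k (Suc t) - x k)
          + gammaI (\<eta> k) t/2 * qsq H (y - xbi k (Suc t)) + 1/2 * qsq (M k) (y - xbi k (Suc t))
        \<le> (d k t + hk) \<bullet> y + gammaI (\<eta> k) t/2 * qsq H (y - xbi k t) + 1/2 * qsq (M k) (y - x k)"
      by (rule three_point[OF symH Msym X(3) m2(2) yX]) (use xbstep[OF t] in \<open>simp add: hk_def\<close>)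
    have c: "real t * \<eta> k / (2 * (1 - \<eta> k * \<nu>)) > 0" using t \<eta>0 \<eta>\<nu> by simp
    have Y: "\<delta> t \<bullet> (xbi k (Suc t) - xbi k t) \<le> (real t * \<eta> k / (2 * (1 - \<eta> k * \<nu>)))/2 * qsq Hi (\<delta> t)
        + 1/(2*(real t * \<eta> k / (2 * (1 - \<eta> k * \<nu>)))) * qsq H (xbi k (Suc t) - xbi k t)"
      by (rule young[OF H HHi c])
    have "(F (xi k (Suc t)) + hk \<bullet> xi k (Suc t) + 1/2 * qsq (M k) (xi k (Suc t) - x k))
            - (F y + hk \<bullet> y + 1/2 * qsq (M k) (y - x k)) + 1/2 * qsq (M k) (y - xi k (Suc t))
         \<le> (1 - betaI t) * ((F (xi k t) + hk \<bullet> xi k t + 1/2 * qsq (M k) (xi k t - x k))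
            - (F y + hk \<bullet> y + 1/2 * qsq (M k) (y - x k)) + 1/2 * qsq (M k) (y - xi k t))
          + betaI t * ((gF (xh k t) - d k t) \<bullet> (xbi k t - y)
                 + gammaI (\<eta> k) t/2 * (qsq H (y - xbi k t) - qsq H (y - xbi k (Suc t)))
                 + real t * \<eta> k / (4 * (1 - \<eta> k * \<nu>)) * qsq Hi (gF (xh k t) - d k t))"
    proof (rule step_ineq[OF Msym Mpsd Hpsd _ \<eta>0 \<eta>\<nu> \<nu>])
      show "1 \<le> real t" using t by simp
      show "betaI t = 2 / (real t + 1)" by (simp add: betaI_def)
      show "gammaI (\<eta> k) t = 2 / (real t * \<eta> k)" by (simp add: gammaI_def)
      show "xh k t = betaI t *\<^sub>R xbi k t + (1 - betaI t) *\<^sub>R xi k t" by (rule xh)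
      show "xi k (Suc t) = betaI t *\<^sub>R xbi k (Suc t) + (1 - betaI t) *\<^sub>R xi k t" by (rule xstep[OF t])
      show "F (xi k (Suc t)) \<le> F (xh k t) + gF (xh k t) \<bullet> (xi k (Suc t) - xh k t) + \<nu>/2 * qsq H (xi k (Suc t) - xh k t)"
        by (rule Fdesc[OF m3 m2(1)])
      show "F (xh k t) + gF (xh k t) \<bullet> (xi k t - xh k t) \<le> F (xi k t)" by (rule Fconv[OF m3 m1(1)])
      show "F (xh k t) + gF (xh k t) \<bullet> (y - xh k t) \<le> F y" by (rule Fconv[OF m3 yX])
      show "(d k t + hk) \<bullet> xbi k (Suc t) + gammaI (\<eta> k) t/2 * qsq H (xbi k (Suc t) - xbi k t)
          + 1/2 * qsq (M k) (xbi k (Suc t) - x k)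
          + gammaI (\<eta> k) t/2 * qsq H (y - xbi k (Suc t)) + 1/2 * qsq (M k) (y - xbi k (Suc t))
        \<le> (d k t + hk) \<bullet> y + gammaI (\<eta> k) t/2 * qsq H (y - xbi k t) + 1/2 * qsq (M k) (y - x k)" by (rule T)
      show "(gF (xh k t) - d k t) \<bullet> (xbi k (Suc t) - xbi k t) \<le> (real t * \<eta> k / (2 * (1 - \<eta> k * \<nu>)))/2 * qsq Hi (gF (xh k t) - d k t)
        + 1/(2*(real t * \<eta> k / (2 * (1 - \<eta> k * \<nu>)))) * qsq H (xbi k (Suc t) - xbi k t)"
        using Y by (simp add: \<delta>_def)
    qed
    then show ?thesis unfolding V_def \<Psi>_def \<delta>_def .
  qed
  define P where "P t = \<delta> t \<bullet> (xbi k t - y)" for t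
  define Q where "Q t = qsq H (y - xbi k t)" for t
  define Rr where "Rr t = real t * \<eta> k / (4 * (1 - \<eta> k * \<nu>)) * qsq Hi (\<delta> t)" for t
  have tel: "real (m k) * (real (m k) + 1) / 2 * V (Suc (m k))
           \<le> (\<Sum>s=1..m k. real s * P s + real s * Rr s) + 1 / \<eta> k * (Q 1 - Q (Suc (m k)))"
    by (rule telescope[OF \<eta>0, of "m k" V P Q Rr]) (use step in \<open>simp_all add: P_def Q_def Rr_def\<close>)
  define S where "S = (\<Sum>s=1..m k. real s * P s + real s * Rr s) + 1 / \<eta> k * (Q 1 - Q (Suc (m k)))"
  have Seq: "S = - (1 / \<eta> k * (qsq H (y - xb (Suc k)) - qsq H (y - xb k))
               - (\<Sum>t=1..m k. real t * (\<delta> t \<bullet> (xbi k t - y)))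
               - \<eta> k / (4 * (1 - \<eta> k * \<nu>)) * (\<Sum>t=1..m k. (real t)^2 * qsq (matrix_inv H) (\<delta> t)))"
  proof -
    have "(\<Sum>s=1..m k. real s * P s + real s * Rr s)
        = (\<Sum>t=1..m k. real t * (\<delta> t \<bullet> (xbi k t - y))) + \<eta> k / (4 * (1 - \<eta> k * \<nu>)) * (\<Sum>t=1..m k. (real t)^2 * qsq (matrix_inv H) (\<delta> t))"
    proof -
      have a: "(\<Sum>s=1..m k. real s * P s + real s * Rr s) = (\<Sum>s=1..m k. real s * P s) + (\<Sum>s=1..m k. real s * Rr s)"
        by (rule sum.distrib)
      have b: "(\<Sum>s=1..m k. real s * Rr s) = \<eta> k / (4 * (1 - \<eta> k * \<nu>)) * (\<Sum>t=1..m k. (real t)^2 * qsq (matrix_inv H) (\<delta> t))"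
        unfolding sum_distrib_left by (rule sum.cong) (simp_all add: Rr_def Hi_def power2_eq_square)
      have c: "(\<Sum>s=1..m k. real s * P s) = (\<Sum>t=1..m k. real t * (\<delta> t \<bullet> (xbi k t - y)))"
        by (simp add: P_def)
      show ?thesis unfolding a b c ..
    qed
    moreover have "Q 1 = qsq H (y - xb k)" by (simp only: Q_def in1(2))
    moreover have "Q (Suc (m k)) = qsq H (y - xb (Suc k))" by (simp add: Q_def out)
    ultimately show ?thesis unfolding S_def by (simp add: algebra_simps)
  qed
  have mpos: "real (m k) * (real (m k) + 1) > 0" using mk[of k] by simp
  have zS: "\<zeta> = - (2 / (real (m k) * (real (m k) + 1))) * S" unfolding \<zeta>_def Seq by (simp only: mult_minus_left mult_minus_right minus_minus)
  have "S \<ge> real (m k) * (real (m k) + 1) / 2 * V (Suc (m k))" using tel unfolding S_def .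
  then have "2 / (real (m k) * (real (m k) + 1)) * S \<ge> 2 / (real (m k) * (real (m k) + 1)) * (real (m k) * (real (m k) + 1) / 2 * V (Suc (m k)))"
    using mpos by (intro mult_left_mono) auto
  also have "2 / (real (m k) * (real (m k) + 1)) * (real (m k) * (real (m k) + 1) / 2 * V (Suc (m k))) = V (Suc (m k))"
    using mpos by (simp add: field_simps)
  finally have zV: "\<zeta> \<le> - V (Suc (m k))" unfolding zS by simp
  have x1: "xi k (Suc (m k)) = x (Suc k)" using out(1)[of k] by simp
  have hyp: "\<zeta> \<le> F y - F (x (Suc k)) + ((transpose A *v (\<beta> *\<^sub>R (A *v x k - b) - lam k)) \<bullet> y
                 - (transpose A *v (\<beta> *\<^sub>R (A *v x k - b) - lam k)) \<bullet> x (Suc k))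
               + 1/2 * qsq (M k) (y - x k) - 1/2 * qsq (M k) (x (Suc k) - x k) - 1/2 * qsq (M k) (y - x (Suc k))"
    using zV unfolding V_def \<Psi>_def x1 hk_def by simp
  have final: "F y - F (x (Suc k))
         + ((y - x (Suc k)) \<bullet> (- (transpose A *v \<mu>)) + (\<mu> - lt) \<bullet> (A *v y - b))
       \<ge> 1/2 * ( (qsq D (y - x (Suc k)) + 1 / (s * \<beta>) * norm (\<mu> - lam (Suc k))^2)
                 - (qsq D (y - x k) + 1 / (s * \<beta>) * norm (\<mu> - lam k)^2)
                 + (qsq D (x k - x (Suc k)) + (2 - s) / \<beta> * norm (lam k - lt)^2) )
         + \<zeta>"
    unfolding D_def lt_def lamstep by (rule alm_alg[OF Msym \<beta> s(1) hyp])
  show "let F = (\<lambda>z. (1 / real N) * (\<Sum>j=1..N. f j z));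
        gF = (\<lambda>z. (1 / real N) *\<^sub>R (\<Sum>j=1..N. gf j z));
        \<delta> = (\<lambda>t. gF (xh k t) - d k t);
        D = M k - \<beta> *\<^sub>R (transpose A ** A);
        lt = lam k - \<beta> *\<^sub>R (A *v x (Suc k) - b);
        \<zeta> = 2 / (real (m k) * (real (m k) + 1)) *
             ( 1 / \<eta> k * (qsq H (y - xb (Suc k)) - qsq H (y - xb k))
               - (\<Sum>t=1..m k. real t * (\<delta> t \<bullet> (xbi k t - y)))
               - \<eta> k / (4 * (1 - \<eta> k * \<nu>)) * (\<Sum>t=1..m k. (real t)^2 * qsq (matrix_inv H) (\<delta> t)))
    in F y - F (x (Suc k))
         + ((y - x (Suc k)) \<bullet> (- (transpose A *v \<mu>)) + (\<mu> - lt) \<bullet> (A *v y - b))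
       \<ge> 1/2 * ( (qsq D (y - x (Suc k)) + 1 / (s * \<beta>) * norm (\<mu> - lam (Suc k))^2)
                 - (qsq D (y - x k) + 1 / (s * \<beta>) * norm (\<mu> - lam k)^2)
                 + (qsq D (x k - x (Suc k)) + (2 - s) / \<beta> * norm (lam k - lt)^2) )
         + \<zeta>"
    unfolding Let_def using final unfolding F_def gF_def \<delta>_def D_def lt_def \<zeta>_def .
qed

end
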